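(* For every positive integer $\nu$ there exists a sequence $v_0,v_1,\dots,v_{\nu^2}$ of length $\nu^2+1$ taking values in a set of $\nu$ symbols and having the isolated equality property: for all distinct indices $i,j$ with $v_i=v_j$, we have $v_{i+1}\ne v_{j+1}$ whenever both are defined, and $v_{i-1}\neq v_{j-1}$ whenever both are defined. *)

theory Defs
  imports Main
begin

definition isolated_equality :: "nat \<Rightarrow> (nat \<Rightarrow> 'a) \<Rightarrow> bool" where
  "isolated_equality L v \<longleftrightarrow>
     (\<forall>i \<le> L. \<forall>j \<le> L. i \<noteq> j \<and> v i = v j \<longrightarrow>
        (i + 1 \<le> L \<and> j + 1 \<le> L \<longrightarrow> v (i + 1) \<noteq> v (j + 1)) \<and>
        (1 \<le> i \<and> 1 \<le> j \<longrightarrow> v (i - 1) \<noteq> v (j - 1)))"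

end

theory Submission
  imports Defs
begin

fun pr :: "nat list \<Rightarrow> (nat \<times> nat) list" where
  "pr (x # y # zs) = (x, y) # pr (y # zs)"
| "pr _ = []"

lemma pr_length: "length (pr xs) = length xs - 1"
  by (induction xs rule: pr.induct) auto

lemma pr_nth: "i < length xs - 1 \<Longrightarrow> pr xs ! i = (xs ! i, xs ! Suc i)"
proof (induction xs arbitrary: i rule: pr.induct)
  case (1 x y zs)
  then show ?case by (cases i) auto
qed auto

lemma pr_append: "xs \<noteq> [] \<Longrightarrow> pr (xs @ y # ys) = pr xs @ [(last xs, y)] @ pr (y # ys)"
proof (induction xs rule: pr.induct)
  case (1 x y zs)
  then show ?case by auto
next
  case ("2_2" v)
  then show ?case by simp
qed auto

lemma pr_set: "set (pr xs) \<subseteq> set xs \<times> set xs"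
  by (induction xs rule: pr.induct) auto

definition ext :: "nat \<Rightarrow> nat list" where
  "ext m = m # concat (map (\<lambda>x. [x, m]) [1..<m]) @ [m, 0]"

lemma pr_mid: "pr (m # concat (map (\<lambda>x. [x, m]) xs) @ ys) =
   concat (map (\<lambda>x. [(m, x), (x, m)]) xs) @ pr (m # ys)"
  by (induction xs) auto

lemma dist_mid: "distinct xs \<Longrightarrow> m \<notin> set xs \<Longrightarrow>
   distinct (concat (map (\<lambda>x. [(m, x), (x, m)]) xs))"
  by (induction xs) auto

lemma set_mid: "set (concat (map (\<lambda>x. [(m, x), (x, m)]) xs)) = (\<Union>x\<in>set xs. {(m,x),(x,m)})"
  by (induction xs) auto

lemma pr_ext: "pr (ext m) = concat (map (\<lambda>x. [(m, x), (x, m)]) [1..<m]) @ [(m, m), (m, 0)]"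
  unfolding ext_def using pr_mid[of m "[1..<m]" "[m,0]"] by simp

lemma ext_set: "m \<ge> 1 \<Longrightarrow> set (ext m) \<subseteq> {0..m}"
  unfolding ext_def by auto

lemma ext_length: "length (ext m) = 2 * m + 1" if "m \<ge> 1"
proof -
  have "length (concat (map (\<lambda>x. [x, m]) xs)) = 2 * length xs" for xs :: "nat list"
    by (induction xs) auto
  then show ?thesis using that unfolding ext_def by simp
qed

lemma dist_ext: "m \<ge> 1 \<Longrightarrow> distinct (pr (ext m)) \<and> (0, m) \<notin> set (pr (ext m))
   \<and> (\<forall>p \<in> set (pr (ext m)). fst p = m \<or> snd p = m)"
  unfolding pr_ext using dist_mid[of "[1..<m]" m] set_mid[of m "[1..<m]"] by auto

fun sq :: "nat \<Rightarrow> nat list" where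
  "sq 0 = [0, 0]"
| "sq (Suc n) = sq n @ ext (Suc n)"

lemma sq_props: "sq n \<noteq> [] \<and> last (sq n) = 0 \<and> set (sq n) \<subseteq> {0..n}
   \<and> length (sq n) = (n+1)^2 + 1 \<and> distinct (pr (sq n))"
proof (induction n)
  case 0
  then show ?case by simp
next
  case (Suc n)
  have e: "ext (Suc n) = Suc n # tl (ext (Suc n))" unfolding ext_def by simp
  have l: "last (ext (Suc n)) = 0" unfolding ext_def by simp
  have pe: "pr (sq n @ ext (Suc n)) = pr (sq n) @ [(0, Suc n)] @ pr (ext (Suc n))"
    using pr_append[of "sq n" "Suc n" "tl (ext (Suc n))"] Suc e by simp
  have d: "distinct (pr (ext (Suc n))) \<and> (0, Suc n) \<notin> set (pr (ext (Suc n)))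
   \<and> (\<forall>p \<in> set (pr (ext (Suc n))). fst p = Suc n \<or> snd p = Suc n)"
    using dist_ext[of "Suc n"] by simp
  have s: "set (pr (sq n)) \<subseteq> {0..n} \<times> {0..n}" using pr_set[of "sq n"] Suc by auto
  have "distinct (pr (sq n @ ext (Suc n)))"
    unfolding pe using d s Suc by fastforce
  moreover have "set (sq (Suc n)) \<subseteq> {0..Suc n}" using Suc ext_set[of "Suc n"] by auto
  moreover have "length (sq (Suc n)) = (Suc n + 1)^2 + 1"
    using Suc ext_length[of "Suc n"] by (simp add: power2_eq_square)
  moreover have "ext (Suc n) \<noteq> []" by (simp add: ext_def)
  ultimately show ?case using l by simp
qed

lemma iso_from_pr:
  assumes "length xs = L + 1" "distinct (pr xs)"
  shows "isolated_equality L (\<lambda>i. xs ! i)"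
  unfolding isolated_equality_def
proof (intro allI impI conjI notI)
  fix i j assume h: "i \<le> L" "j \<le> L" "i \<noteq> j \<and> xs ! i = xs ! j"
  {
    assume a: "i + 1 \<le> L \<and> j + 1 \<le> L" "xs ! (i + 1) = xs ! (j + 1)"
    have "pr xs ! i = pr xs ! j" using a h assms pr_nth[of i xs] pr_nth[of j xs] by simp
    then show False using a h assms nth_eq_iff_index_eq[of "pr xs" i j] pr_length[of xs] by simp
  }
  {
    assume a: "1 \<le> i \<and> 1 \<le> j" "xs ! (i - 1) = xs ! (j - 1)"
    obtain i' j' where ij: "i = Suc i'" "j = Suc j'" using a(1) by (cases i; cases j) auto
    have "pr xs ! i' = pr xs ! j'"
      using a h assms pr_nth[of i' xs] pr_nth[of j' xs] ij by simp
    then show False using a h assms nth_eq_iff_index_eq[of "pr xs" i' j'] pr_length[of xs] ij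
      by simp
  }
qed

theorem mainTheorem4:
  fixes \<nu> :: nat
  assumes "\<nu> \<ge> 1"
  shows "\<exists>v :: nat \<Rightarrow> nat. (\<forall>i \<le> \<nu>^2. v i \<in> {0..<\<nu>}) \<and> isolated_equality (\<nu>^2) v"
proof -
  obtain n where n: "\<nu> = n + 1" using assms by (cases \<nu>) auto
  have P: "sq n \<noteq> [] \<and> last (sq n) = 0 \<and> set (sq n) \<subseteq> {0..n}
   \<and> length (sq n) = (n+1)^2 + 1 \<and> distinct (pr (sq n))" by (rule sq_props)
  have "\<forall>i \<le> \<nu>^2. sq n ! i \<in> {0..<\<nu>}"
  proof (intro allI impI)
    fix i assume "i \<le> \<nu>^2"
    then have "sq n ! i \<in> set (sq n)" using P n by simp
    then show "sq n ! i \<in> {0..<\<nu>}" using P n by auto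
  qed
  moreover have "isolated_equality (\<nu>^2) (\<lambda>i. sq n ! i)"
    using iso_from_pr P n by simp
  ultimately show ?thesis by blast
qed

end
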